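(* Let $n\ge3$. Let $\tilde\Lambda_1$ be the set of $\alpha\in\mathbb{R}\setminus\mathrm{ev}(A_n)$ satisfying \[ (\alpha+2)\langle\mathbf 1,(A_n-\alpha I)^{-1}\mathbf 1\rangle-1=0, \] and put $\Lambda_1=\tilde\Lambda_1\setminus(\mathrm{ev}(A_n)\cup\{0,-1,-2\})$. Then \[ \Lambda_1\setminus\{2\}=\{x\in\mathbb{R}:\Phi_n(x)=0\}\setminus(\mathrm{ev}(A_n)\cup\{0,-1,2,-2\}). \]
   Context: $A_n$ is the $n\times n$ adjacency matrix of the path $P_n$ (ones on the super- and subdiagonal, zeros elsewhere), $\mathrm{ev}(A_n)$ its set of eigenvalues, $\mathbf 1$ the all-ones vector. $U_n$ is the Chebyshev polynomial of the second kind, $U_n(\cos\theta)=\sin((n+1)\theta)/\sin\theta$, $\tilde U_n(x)=U_n(x/2)$, and $\Phi_n(x)=((n+1)x^2-6x-4n)\tilde U_n(x)+2(x+2)\tilde U_{n-1}(x)+2(x+2)$. *)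

theory Defs
  imports "Jordan_Normal_Form.Char_Poly" "Jordan_Normal_Form.Gauss_Jordan_Elimination"
begin

definition path_adj :: "nat \<Rightarrow> real mat" where
  "path_adj n = mat n n (\<lambda>(i,j). if i = j + 1 \<or> j = i + 1 then 1 else 0)"

definition path_ev :: "nat \<Rightarrow> real set" where
  "path_ev n = {a. eigenvalue (path_adj n) a}"

definition ones_vec :: "nat \<Rightarrow> real vec" where
  "ones_vec n = vec n (\<lambda>_. 1)"

(* matrix inverse (only meaningful for invertible matrices) *)
definition mat_inv :: "real mat \<Rightarrow> real mat" where
  "mat_inv M = the (mat_inverse M)"

(* Chebyshev polynomials of the second kind, U_0 = 1, U_1 = 2x, U_{k+2} = 2x U_{k+1} - U_k,
   so that U_k(cos t) = sin((k+1)t)/sin t *)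
fun chebU :: "nat \<Rightarrow> real \<Rightarrow> real" where
  "chebU 0 x = 1"
| "chebU (Suc 0) x = 2 * x"
| "chebU (Suc (Suc k)) x = 2 * x * chebU (Suc k) x - chebU k x"

definition chebU_t :: "nat \<Rightarrow> real \<Rightarrow> real" where
  "chebU_t k x = chebU k (x / 2)"

definition Phi :: "nat \<Rightarrow> real \<Rightarrow> real" where
  "Phi n x = ((real n + 1) * x^2 - 6 * x - 4 * real n) * chebU_t n x
            + 2 * (x + 2) * chebU_t (n - 1) x + 2 * (x + 2)"

definition Lambda1_tilde :: "nat \<Rightarrow> real set" where
  "Lambda1_tilde n = {\<alpha>. \<alpha> \<notin> path_ev n \<and>
     (\<alpha> + 2) * (ones_vec n \<bullet> (mat_inv (path_adj n - \<alpha> \<cdot>\<^sub>m 1\<^sub>m n) *\<^sub>v ones_vec n)) - 1 = 0}"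

definition Lambda1 :: "nat \<Rightarrow> real set" where
  "Lambda1 n = Lambda1_tilde n - (path_ev n \<union> {0, -1, -2})"

end

theory Submission
  imports Defs
begin

lemma path_adj_carrier: "path_adj n \<in> carrier_mat n n"
  unfolding path_adj_def by auto

lemma path_adj_row:
  assumes i: "i < n"
  shows "(path_adj n *\<^sub>v vec n f) $ i
     = (if 0 < i then f (i - 1) else 0) + (if i + 1 < n then f (i + 1) else 0)"
proof -
  have "(path_adj n *\<^sub>v vec n f) $ i
      = (\<Sum>j<n. (if i = j + 1 \<or> j = i + 1 then 1 else 0) * f j)"
    using i unfolding path_adj_def
    by (simp add: lessThan_atLeast0 scalar_prod_def)
  also have "\<dots> = (\<Sum>j<n. (if j = i - 1 \<and> 0 < i then f j else 0))
                 + (\<Sum>j<n. (if j = i + 1 then f j else 0))"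
    unfolding sum.distrib[symmetric]
    by (rule sum.cong) auto
  also have "\<dots> = (if 0 < i then f (i - 1) else 0) + (if i + 1 < n then f (i + 1) else 0)"
    using i by (simp add: sum.delta' sum.If_cases)
  finally show ?thesis .
qed


lemma smult_one_mult_vec:
  assumes v: "v \<in> carrier_vec n"
  shows "((x::real) \<cdot>\<^sub>m 1\<^sub>m n) *\<^sub>v v = x \<cdot>\<^sub>v v"
proof (rule eq_vecI)
  fix i assume i: "i < dim_vec (x \<cdot>\<^sub>v v)"
  hence i': "i < n" using v by simp
  have "((x \<cdot>\<^sub>m 1\<^sub>m n) *\<^sub>v v) $ i = (\<Sum>j<n. (if i = j then x * v $ j else 0))"
    using i' v unfolding scalar_prod_def
    by (auto simp: lessThan_atLeast0 intro!: sum.cong)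
  also have "\<dots> = x * v $ i" using i' by (simp add: sum.delta)
  finally show "((x \<cdot>\<^sub>m 1\<^sub>m n) *\<^sub>v v) $ i = (x \<cdot>\<^sub>v v) $ i" using i' v by simp
qed (use v in simp)

definition ww :: "real \<Rightarrow> nat \<Rightarrow> real" where
  "ww x k = (if k = 0 then 0 else chebU_t (k - 1) x)"

lemma ww0[simp]: "ww x 0 = 0"
  by (simp add: ww_def)

lemma ww1[simp]: "ww x (Suc 0) = 1"
  unfolding ww_def chebU_t_def by simp

lemma ww_rec: "ww x (k + 2) = x * ww x (k + 1) - ww x k"
proof (cases k)
  case 0 then show ?thesis by (simp add: ww_def chebU_t_def)
next
  case (Suc m) then show ?thesis by (simp add: ww_def chebU_t_def)
qed

lemma ww_sum: "(2 - x) * (\<Sum>i<n. ww x (i + 1)) = 1 - ww x (n + 1) + ww x n"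
proof (induction n)
  case 0 then show ?case by simp
next
  case (Suc n)
  have r: "ww x (n + 2) = x * ww x (n + 1) - ww x n" by (rule ww_rec)
  have "(2 - x) * (\<Sum>i<Suc n. ww x (i + 1)) = (2 - x) * (\<Sum>i<n. ww x (i + 1)) + (2 - x) * ww x (n+1)"
    by (simp add: distrib_left)
  also have "\<dots> = 1 - ww x (Suc n + 1) + ww x (Suc n)" using Suc.IH r by (simp add: left_diff_distrib)
  finally show ?case .
qed

lemma ev_ww:
  assumes n: "n \<ge> 1" and x: "x \<notin> path_ev n"
  shows "ww x (n + 1) \<noteq> 0"
proof
  assume W: "ww x (n + 1) = 0"
  define v where "v = vec n (\<lambda>i. ww x (i + 1))"
  have "path_adj n *\<^sub>v v = x \<cdot>\<^sub>v v"
  proof (rule eq_vecI)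
    fix i assume "i < dim_vec (x \<cdot>\<^sub>v v)"
    hence i: "i < n" by (simp add: v_def)
    have a: "(if 0 < i then ww x (i - 1 + 1) else 0) = ww x i" by (cases i) auto
    have b: "(if i + 1 < n then ww x (i + 1 + 1) else 0) = ww x (i + 2)"
    proof (cases "i + 1 < n")
      case False
      hence "i + 2 = n + 1" using i by simp
      then show ?thesis using W False by simp
    qed simp
    have "(path_adj n *\<^sub>v v) $ i = ww x i + ww x (i + 2)"
      unfolding v_def path_adj_row[OF i] a b ..
    also have "\<dots> = x * ww x (i + 1)" using ww_rec[of x i] by simp
    finally show "(path_adj n *\<^sub>v v) $ i = (x \<cdot>\<^sub>v v) $ i" using i by (simp add: v_def)
  qed (simp add: v_def path_adj_def)
  moreover have "v \<noteq> 0\<^sub>v n"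
  proof
    assume "v = 0\<^sub>v n"
    hence "v $ 0 = 0" using n by simp
    thus False using n by (simp add: v_def)
  qed
  ultimately have "eigenvalue (path_adj n) x"
    unfolding eigenvalue_def eigenvector_def
    by (intro exI[of _ v]) (auto simp: v_def path_adj_def)
  thus False using x by (simp add: path_ev_def)
qed


lemma sum_reflect_ww: "(\<Sum>i<n. ww x (n - i)) = (\<Sum>i<n. ww x (i + 1))"
proof -
  have "(\<Sum>i<n. ww x (n - i)) = (\<Sum>i<n. (\<lambda>j. ww x (j + 1)) (n - Suc i))"
    by (rule sum.cong) (auto simp: Suc_diff_Suc)
  also have "\<dots> = (\<Sum>i<n. ww x (i + 1))" by (rule sum.nat_diff_reindex)
  finally show ?thesis .
qed

lemma aux_alg: "(d::real) \<noteq> 0 \<Longrightarrow> W \<noteq> 0 \<Longrightarrow>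
   r * (1 / d) - 1 / d / W * (2 * (t / d)) = (r - 2 * (t / d) / W) / d"
  by (simp add: field_simps)

lemma quad_form:
  assumes n: "n \<ge> 1" and x: "x \<notin> path_ev n" and x2: "x \<noteq> 2"
  shows "ones_vec n \<bullet> (mat_inv (path_adj n - x \<cdot>\<^sub>m 1\<^sub>m n) *\<^sub>v ones_vec n)
    = (real n - 2 * ((1 - ww x (n + 1) + ww x n) / (2 - x)) / ww x (n + 1)) / (2 - x)"
proof -
  define A where "A = path_adj n"
  define M where "M = A - x \<cdot>\<^sub>m 1\<^sub>m n"
  define W where "W = ww x (n + 1)"
  define c where "c = 1 / (2 - x)"
  define Z where "Z k = c * (1 - (ww x k + ww x (n + 1 - k)) / W)" for k
  define y where "y = vec n (\<lambda>i. Z (i + 1))"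
  have W0: "W \<noteq> 0" using ev_ww[OF n x] by (simp add: W_def)
  have x2': "2 - x \<noteq> 0" using x2 by simp
  have A: "A \<in> carrier_mat n n" by (simp add: A_def path_adj_carrier)
  have M: "M \<in> carrier_mat n n" unfolding M_def by (rule minus_carrier_mat) simp
  have "char_matrix A x = M"
    unfolding char_matrix_def M_def using A by (intro eq_matI) auto
  hence "det M \<noteq> 0" using eigenvalue_det[OF A, of x] x by (simp add: path_ev_def A_def)
  hence U: "M \<in> Units (ring_mat TYPE(real) n ())" by (rule det_non_zero_imp_unit[OF M])
  obtain B where MB: "mat_inverse M = Some B"
    using mat_inverse(1)[OF M, of "()"] U by (cases "mat_inverse M") auto
  from mat_inverse(2)[OF M MB] have BM: "B * M = 1\<^sub>m n" and B: "B \<in> carrier_mat n n" by auto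
  have Z0: "Z 0 = 0" using W0 by (simp add: Z_def W_def)
  have Zn: "Z (n + 1) = 0" using W0 by (simp add: Z_def W_def)
  have Zrec: "Z k + Z (k + 2) = x * Z (k + 1) + 1" if k: "k < n" for k
  proof -
    obtain m where m: "n = k + m + 1" using k by (metis add.commute less_imp_Suc_add add_Suc_right Suc_eq_plus1)
    have e1: "n + 1 - k = m + 2" "n + 1 - (k + 1) = m + 1" "n + 1 - (k + 2) = m" using m by auto
    have r1: "ww x (k + 2) = x * ww x (k + 1) - ww x k" by (rule ww_rec)
    have r2: "ww x (m + 2) = x * ww x (m + 1) - ww x m" by (rule ww_rec)
    have Za: "Z j = c - c / W * (ww x j + ww x (n + 1 - j))" for j
      by (simp add: Z_def right_diff_distrib)
    have "Z k + Z (k + 2) - x * Z (k + 1) = c * (2 - x)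
       - c / W * ((ww x k + ww x (k + 2) - x * ww x (k + 1)) + (ww x (m + 2) + ww x m - x * ww x (m + 1)))"
      unfolding Za e1 by (simp add: algebra_simps)
    also have "\<dots> = 1" using r1 r2 x2' by (simp add: c_def)
    finally show ?thesis by simp
  qed
  have y: "y \<in> carrier_vec n" by (simp add: y_def)
  have My: "M *\<^sub>v y = ones_vec n"
  proof -
    have "M *\<^sub>v y = A *\<^sub>v y - x \<cdot>\<^sub>v y"
      unfolding M_def using A y by (simp add: minus_mult_distrib_mat_vec smult_one_mult_vec)
    also have "\<dots> = ones_vec n"
    proof (rule eq_vecI)
      fix i assume "i < dim_vec (ones_vec n)"
      hence i: "i < n" by (simp add: ones_vec_def)
      have a: "(if 0 < i then Z (i - 1 + 1) else 0) = Z i" using Z0 by (cases i) auto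
      have b: "(if i + 1 < n then Z (i + 1 + 1) else 0) = Z (i + 2)"
      proof (cases "i + 1 < n")
        case False
        hence "i + 2 = n + 1" using i by simp
        then show ?thesis using Zn False by simp
      qed simp
      have "(A *\<^sub>v y) $ i = Z i + Z (i + 2)"
        unfolding y_def A_def path_adj_row[OF i] a b ..
      then show "(A *\<^sub>v y - x \<cdot>\<^sub>v y) $ i = ones_vec n $ i"
        using i A Zrec[OF i] by (simp add: y_def ones_vec_def)
    qed (use A in \<open>simp add: ones_vec_def y_def\<close>)
    finally show ?thesis .
  qed
  have inv: "mat_inv M *\<^sub>v ones_vec n = y"
  proof -
    have "mat_inv M *\<^sub>v ones_vec n = B *\<^sub>v (M *\<^sub>v y)" using MB My by (simp add: mat_inv_def)
    also have "\<dots> = (B * M) *\<^sub>v y" using B M y by simp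
    also have "\<dots> = y" using BM y by simp
    finally show ?thesis .
  qed
  have "ones_vec n \<bullet> y = (\<Sum>i<n. Z (i + 1))"
    unfolding ones_vec_def y_def scalar_prod_def by (simp add: lessThan_atLeast0)
  also have "\<dots> = (\<Sum>i<n. c - c / W * (ww x (i + 1) + ww x (n - i)))"
    by (rule sum.cong) (auto simp: Z_def field_simps)
  also have "\<dots> = real n * c - c / W * ((\<Sum>i<n. ww x (i + 1)) + (\<Sum>i<n. ww x (n - i)))"
    by (simp add: sum_subtractf sum_distrib_left[symmetric] sum.distrib sum_divide_distrib[symmetric])
  also have "\<dots> = real n * c - c / W * (2 * ((1 - ww x (n + 1) + ww x n) / (2 - x)))"
  proof -
    have "(\<Sum>i<n. ww x (i + 1)) = (1 - ww x (n + 1) + ww x n) / (2 - x)"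
      using ww_sum[of x n] x2' by (simp add: field_simps)
    thus ?thesis by (simp add: sum_reflect_ww)
  qed
  also have "\<dots> = (real n - 2 * ((1 - ww x (n + 1) + ww x n) / (2 - x)) / ww x (n + 1)) / (2 - x)"
    unfolding c_def W_def by (rule aux_alg[OF x2' W0[unfolded W_def]])
  finally show ?thesis using inv by (simp add: M_def A_def)
qed


lemma aux_alg2:
  fixes x W a r :: real
  assumes d: "2 - x \<noteq> 0" and W: "W \<noteq> 0"
  shows "(x + 2) * ((r - 2 * ((1 - W + a) / (2 - x)) / W) / (2 - x)) - 1
    = - (((r + 1) * x^2 - 6 * x - 4 * r) * W + 2 * (x + 2) * a + 2 * (x + 2)) / ((2 - x)^2 * W)"
proof -
  obtain e where e: "x = 2 - e" and e0: "e \<noteq> 0" using d by (intro that[of "2 - x"]) auto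
  show ?thesis unfolding e using e0 W by (simp add: field_simps power2_eq_square)
qed

lemma key_equiv:
  assumes n: "n \<ge> 1" and x: "x \<notin> path_ev n" and x2: "x \<noteq> 2"
  shows "(x + 2) * (ones_vec n \<bullet> (mat_inv (path_adj n - x \<cdot>\<^sub>m 1\<^sub>m n) *\<^sub>v ones_vec n)) - 1 = 0
     \<longleftrightarrow> Phi n x = 0"
proof -
  have d: "2 - x \<noteq> 0" using x2 by simp
  have W: "ww x (n + 1) \<noteq> 0" by (rule ev_ww[OF n x])
  have P: "Phi n x = ((real n + 1) * x^2 - 6 * x - 4 * real n) * ww x (n + 1)
            + 2 * (x + 2) * ww x n + 2 * (x + 2)"
    using n unfolding Phi_def ww_def by simp
  have g: "\<And>Q::real. (- Q / ((2 - x)^2 * ww x (n + 1)) = 0) = (Q = 0)" using d W by simp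
  show ?thesis unfolding quad_form[OF n x x2] aux_alg2[OF d W] P by (rule g)
qed

theorem proposition4p5:
  fixes n :: nat
  assumes "n \<ge> 3"
  shows "Lambda1 n - {2} = {x. Phi n x = 0} - (path_ev n \<union> {0, -1, 2, -2})"
proof -
  have n: "n \<ge> 1" using assms by simp
  show ?thesis
    unfolding Lambda1_def Lambda1_tilde_def
    using key_equiv[OF n] by auto
qed

end
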